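(* On the hard instance $G_{k,m}$ described in the context, for all sufficiently large $k$ (independently of $m$), running Water-Filling yields $x_{u_{t,i}}=1$ immediately after the deadline of $u_{t,i}$, for every $t\in[m-1]$ and $i\in[k]$.
   Context: Fully online fractional matching model: an undirected graph is revealed online; each step is the arrival or the deadline of a vertex; at arrival, edges to previously arrived vertices are revealed; every neighbor of $v$ arrives before $v$'s deadline. The algorithm maintains $x_{uv}\ge 0$ with water-level $x_w:=\sum_{z}x_{wz}\le1$; $x_{uv}$ (with $u$ having the earlier deadline) may only be increased at $u$'s deadline. Water-Filling: at the deadline of $u$, with $N(u)$ the neighbors of $u$ whose deadlines have not been reached, while $x_u<1$ and $\min_{v\in N(u)}x_v<1$, continuously increase $x_{uv}$ at equal rates for all $v\in\arg\min_{v\in N(u)}x_v$. Let $c=2-\sqrt2$, $f(x)=\tfrac12(\ln(1-x)+\ln(1-c+x))+\frac{1}{\sqrt2(x-1)}+\frac{2+\sqrt2-\ln(1-c)}{2}$ on $[0,c]$ (a strictly decreasing bijection onto $[0,1]$), and $h(x)=f(c-f^{-1}(x))$ for $x\in[0,1]$. Hard instance $G_{k,m}$: vertex set $\bigcup_{t\in[m]}(U_t\cup V_t)$ with $U_t=\{u_{t,1},\dots,u_{t,k}\}$, $V_t=\{v_{t,1},\dots,v_{t,k}\}$. Edges: $(u_{t,i},v_{t,j})$ for all $t\in[m]$, $i\in[k]$, $j\ge i$; and $(u_{t,i},u_{t+1,j})$ for all $t\in[m-1]$, $i\in[k]$, $1\le j\le\lfloor k\,h(\tfrac{i-1}{k})\rfloor$.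 All vertices arrive before any deadline. The deadlines of the $u$-vertices come first, in lexicographic order of $(t,i)$; afterwards the deadlines of all $v$-vertices are reached (in any order). *)

theory Defs
  imports Complex_Main
begin

definition c_const :: real where
  "c_const = 2 - sqrt 2"

definition f_fun :: "real \<Rightarrow> real" where
  "f_fun x = (ln (1 - x) + ln (1 - c_const + x)) / 2 + 1 / (sqrt 2 * (x - 1))
             + (2 + sqrt 2 - ln (1 - c_const)) / 2"

text \<open>Inverse of f, a strictly decreasing bijection from [0,c] onto [0,1].\<close>
definition f_inv :: "real \<Rightarrow> real" where
  "f_inv y = (THE x. x \<in> {0..c_const} \<and> f_fun x = y)"

definition h_fun :: "real \<Rightarrow> real" where
  "h_fun x = f_fun (c_const - f_inv x)"

datatype vtx = U nat nat | V nat nat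

definition verts :: "nat \<Rightarrow> nat \<Rightarrow> vtx set" where
  "verts k m = {U t i | t i. t \<in> {1..m} \<and> i \<in> {1..k}}
             \<union> {V t j | t j. t \<in> {1..m} \<and> j \<in> {1..k}}"

fun edge_dir :: "nat \<Rightarrow> nat \<Rightarrow> vtx \<Rightarrow> vtx \<Rightarrow> bool" where
  "edge_dir k m (U t i) (V t' j) =
     (t' = t \<and> t \<in> {1..m} \<and> i \<in> {1..k} \<and> j \<in> {1..k} \<and> i \<le> j)"
| "edge_dir k m (U t i) (U t' j) =
     (t' = t + 1 \<and> t \<in> {1..m-1} \<and> i \<in> {1..k} \<and> 1 \<le> j \<and>
      int j \<le> \<lfloor>real k * h_fun ((real i - 1) / real k)\<rfloor>)"
| "edge_dir k m _ _ = False"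

definition adj :: "nat \<Rightarrow> nat \<Rightarrow> vtx \<Rightarrow> vtx \<Rightarrow> bool" where
  "adj k m a b \<longleftrightarrow> edge_dir k m a b \<or> edge_dir k m b a"

text \<open>Deadlines of the u-vertices, in lexicographic order of (t,i). They all come
  before the deadlines of the v-vertices, which are irrelevant for the statement.\<close>
definition u_deadlines :: "nat \<Rightarrow> nat \<Rightarrow> vtx list" where
  "u_deadlines k m = concat (map (\<lambda>t. map (\<lambda>i. U t i) [1..<k+1]) [1..<m+1])"

text \<open>Neighbours of the vertex whose deadline is the j-th (0-based) u-deadline,
  whose deadlines have not yet been reached.\<close>
definition open_nbrs :: "nat \<Rightarrow> nat \<Rightarrow> nat \<Rightarrow> vtx set" where
  "open_nbrs k m j = {w \<in> verts k m. adj k m (u_deadlines k m ! j) w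
                       \<and> w \<notin> set (take (Suc j) (u_deadlines k m))}"

definition level :: "vtx set \<Rightarrow> (vtx \<Rightarrow> vtx \<Rightarrow> real) \<Rightarrow> vtx \<Rightarrow> real" where
  "level Vs x w = (\<Sum>z\<in>Vs. x w z)"

text \<open>One Water-Filling step at the deadline of u with open neighbourhood N:
  the continuous process raises the levels of the minimum-level neighbours uniformly;
  its outcome is that every neighbour v receives max 0 (L - x_v) for a final
  water level L \<le> 1, and the process stops when x_u = 1 or the minimum neighbour level
  reaches 1 (i.e. L = 1).\<close>
definition wf_step :: "vtx set \<Rightarrow> (vtx \<Rightarrow> vtx \<Rightarrow> real) \<Rightarrow> vtx \<Rightarrow> vtx set
                       \<Rightarrow> (vtx \<Rightarrow> vtx \<Rightarrow> real) \<Rightarrow> bool" where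
  "wf_step Vs x u N x' \<longleftrightarrow>
     (\<exists>L. L \<le> 1 \<and>
        (\<forall>v\<in>N. x' u v = x u v + max 0 (L - level Vs x v) \<and> x' v u = x' u v) \<and>
        (\<forall>a b. \<not> ((a = u \<and> b \<in> N) \<or> (b = u \<and> a \<in> N)) \<longrightarrow> x' a b = x a b) \<and>
        level Vs x' u \<le> 1 \<and>
        (level Vs x' u = 1 \<or> L = 1))"

definition wf_run :: "nat \<Rightarrow> nat \<Rightarrow> (nat \<Rightarrow> vtx \<Rightarrow> vtx \<Rightarrow> real) \<Rightarrow> bool" where
  "wf_run k m xs \<longleftrightarrow>
     xs 0 = (\<lambda>_ _. 0) \<and>
     (\<forall>j < length (u_deadlines k m).
        wf_step (verts k m) (xs j) (u_deadlines k m ! j) (open_nbrs k m j) (xs (Suc j)))"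

end

theory Submission
  imports Defs
begin

definition R_fun :: "real \<Rightarrow> real" where
  "R_fun y = 1/(sqrt 2*(1-y)) - 1/(sqrt 2*(1-c_const+y))"

lemma s2_bounds: "1.414 < sqrt (2::real)" "sqrt (2::real) < 1.415"
proof -
  show "1.414 < sqrt (2::real)" by (rule real_less_rsqrt) (simp add: power2_eq_square)
  have "sqrt 2 < sqrt (1.415^2::real)" by (rule real_sqrt_less_mono) (simp add: power2_eq_square)
  then show "sqrt (2::real) < 1.415" by simp
qed

lemma deriv_f:
  assumes "c_const - 1 < y" "y < 1"
  shows "(f_fun has_real_derivative (-(1 + R_fun y)/(1-y))) (at y)"
proof -
  have p1: "0 < 1 - y" and p2: "0 < 1 - c_const + y" using assms by auto
  have d1: "((\<lambda>x. ln (1 - x)) has_real_derivative (-1/(1-y))) (at y)"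
    using p1 by (auto intro!: derivative_eq_intros)
  have d2: "((\<lambda>x. ln (1 - c_const + x)) has_real_derivative (1/(1-c_const+y))) (at y)"
    using p2 by (auto intro!: derivative_eq_intros)
  have d3: "((\<lambda>x. 1/(sqrt 2*(x-1))) has_real_derivative (-1/((y-1)*(sqrt 2*(y-1))))) (at y)"
    using p1 by (auto intro!: derivative_eq_intros)
  have "(f_fun has_real_derivative ((-1/(1-y) + 1/(1-c_const+y))/2 + (-1/((y-1)*(sqrt 2*(y-1)))))) (at y)"
    unfolding f_fun_def
    by (rule derivative_eq_intros d1 d2 d3 refl | simp)+
  moreover have "((-1/(1-y) + 1/(1-c_const+y))/2 + (-1/((y-1)*(sqrt 2*(y-1))))) = (-(1 + R_fun y)/(1-y))"
  proof -
    define s where "s = sqrt (2::real)"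
    have ss: "s * s = 2" unfolding s_def by simp
    have sp: "s > 0" unfolding s_def by simp
    define a where "a = 1 - y"
    define b where "b = s - 1 + y"
    have ap: "a > 0" using p1 a_def by simp
    have bp: "b > 0" using p2 unfolding c_const_def s_def b_def by simp
    have ab: "a + b = s" unfolding a_def b_def by simp
    have "((-1/a + 1/b)/2 + (-1/(s*a*a))) = (-(1 + (1/(s*a) - 1/(s*b)))/a)"
      using ap bp sp
      apply (simp add: field_simps)
    proof -
      have "a*a*a*a*b*(s*s)*(a+b) = a*a*a*a*b*(s*2)" using ss ab by simp
      then show "a * (a * (a * (a * (a * (b * (s * s)))))) + a * (a * (a * (a * (b * (b * (s * s)))))) = a * (a * (a * (a * (b * (s * 2)))))"
        by (simp add: algebra_simps)
    qed
    note main = this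
    have e1: "1 - y = a" unfolding a_def by simp
    have e2: "1 - c_const + y = b" unfolding b_def c_const_def s_def by simp
    have e3: "(y-1)*(sqrt 2*(y-1)) = s*a*a" unfolding a_def s_def by (simp add: algebra_simps)
    have e4: "R_fun y = 1/(s*a) - 1/(s*b)" unfolding R_fun_def s_def[symmetric] using e1 e2 by simp
    show ?thesis using main by (simp only: e1 e2 e3 e4)
  qed
  ultimately show ?thesis by simp
qed
lemma c_facts: "0 < c_const" "c_const < 1" "c_const = 2 - sqrt 2" "1 - c_const = sqrt 2 - 1"
  using s2_bounds by (auto simp: c_const_def)

lemma R_mono:
  assumes "0 \<le> y" "y \<le> z" "z \<le> c_const"
  shows "R_fun y \<le> R_fun z"
proof -
  have z1: "0 < 1 - z" and y2: "0 < 1 - c_const + y" using assms c_facts by auto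
  have "1/(sqrt 2*(1-y)) \<le> 1/(sqrt 2*(1-z))"
    using z1 assms by (intro divide_left_mono mult_left_mono mult_pos_pos) auto
  moreover have "1/(sqrt 2*(1-c_const+z)) \<le> 1/(sqrt 2*(1-c_const+y))"
    using y2 assms by (intro divide_left_mono mult_left_mono mult_pos_pos) auto
  ultimately show ?thesis unfolding R_fun_def by linarith
qed

lemma R_ge:
  assumes "0 \<le> y" "y \<le> c_const"
  shows "y \<le> 1 + R_fun y"
proof -
  define s where "s = sqrt (2::real)"
  have sp: "s > 1.414" "s < 1.415" using s2_bounds s_def by auto
  have c: "c_const = 2 - s" by (simp add: c_const_def s_def)
  have y1: "0 < 1 - y" using assms c_facts by auto
  have b: "0 < s - 1 + y" using sp assms by auto
  have i1: "1 + y \<le> 1/(1-y)"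
  proof -
    have "(1+y)*(1-y) \<le> 1" by (simp add: algebra_simps)
    then show ?thesis using y1 by (simp add: field_simps)
  qed
  have i2: "1/(s - 1 + y) \<le> (s+1)*(1-y)"
  proof -
    have "(s+1)*(1-y)*(s-1+y) = (s*s - 1) + (s+1)*y*(2 - s - y)" by (simp add: algebra_simps)
    also have "s*s = 2" unfolding s_def by simp
    finally have e: "(s+1)*(1-y)*(s-1+y) = 1 + (s+1)*y*(2 - s - y)" by simp
    have "0 \<le> (s+1)*y*(2 - s - y)" using assms sp c by (intro mult_nonneg_nonneg) auto
    then have "1 \<le> (s+1)*(1-y)*(s-1+y)" using e by simp
    then show ?thesis using b by (simp add: field_simps)
  qed
  have cy: "1 - c_const + y = s - 1 + y" by (simp add: c)
  have R: "R_fun y = (1/(1-y) - 1/(s-1+y))/s"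
    unfolding R_fun_def cy s_def[symmetric] by (simp add: diff_divide_distrib mult.commute)
  have "(1 + y) - (s+1)*(1-y) \<le> 1/(1-y) - 1/(s-1+y)" using i1 i2 by linarith
  then have "((1 + y) - (s+1)*(1-y))/s \<le> R_fun y" unfolding R using sp
    by (intro divide_right_mono) auto
  moreover have "((1 + y) - (s+1)*(1-y))/s = ((s+2)*y - s)/s" by (simp add: algebra_simps)
  moreover have "((s+2)*y - s)/s = (s+2)*y/s - 1" using sp by (simp add: field_simps)
  moreover have "y \<le> (s+2)*y/s" using sp assms by (simp add: field_simps)
  ultimately show ?thesis by linarith
qed

lemma f_cont: "continuous_on {0..c_const} f_fun"
proof (intro continuous_at_imp_continuous_on ballI)
  fix x assume "x \<in> {0..c_const}"
  then have "c_const - 1 < x" "x < 1" using c_facts by auto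
  then show "isCont f_fun x" using deriv_f DERIV_isCont by blast
qed

lemma f_dec_quant:
  assumes "0 \<le> a" "a \<le> b" "b \<le> c_const"
  shows "(b-a)^2/2 \<le> f_fun a - f_fun b"
proof -
  let ?g = "\<lambda>x. f_fun x + (x-a)^2/2"
  have "?g b \<le> ?g a"
  proof (rule DERIV_nonpos_imp_nonincreasing[OF assms(2)])
    fix x assume x: "a \<le> x" "x \<le> b"
    then have x1: "c_const - 1 < x" "x < 1" "0 \<le> x" "x \<le> c_const" using assms c_facts by auto
    have "(?g has_real_derivative (-(1 + R_fun x)/(1-x) + (x-a))) (at x)"
      using deriv_f[OF x1(1,2)] by (auto intro!: derivative_eq_intros)
    moreover have "-(1 + R_fun x)/(1-x) + (x-a) \<le> 0"
    proof -
      have r: "x \<le> 1 + R_fun x" using R_ge x1 by auto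
      have e: "(1 + R_fun x)/(1-x) - (1 + R_fun x) = (1 + R_fun x)*x/(1-x)"
        using x1 by (simp add: field_simps)
      have "0 \<le> (1 + R_fun x)*x/(1-x)" using x1 r by (intro divide_nonneg_pos mult_nonneg_nonneg) auto
      then have "1 + R_fun x \<le> (1 + R_fun x)/(1-x)" using e by linarith
      then show ?thesis using r assms x by linarith
    qed
    ultimately show "\<exists>y. (?g has_real_derivative y) (at x) \<and> y \<le> 0" by blast
  qed
  then show ?thesis by simp
qed

lemma aux_div: "(d::real) \<noteq> 0 \<Longrightarrow> -A/d - B*(-1/d) = (B - A)/d"
  by (simp add: field_simps)

lemma f_key:
  assumes "0 \<le> a" "a \<le> b" "b \<le> c_const"
  shows "f_fun a - f_fun b \<le> (1 + R_fun b) * (ln (1-a) - ln (1-b))"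
proof -
  let ?g = "\<lambda>x. f_fun x - (1 + R_fun b) * ln (1-x)"
  have "?g a \<le> ?g b"
  proof (rule DERIV_nonneg_imp_nondecreasing[OF assms(2)])
    fix x assume x: "a \<le> x" "x \<le> b"
    then have x1: "c_const - 1 < x" "x < 1" "0 \<le> x" "x \<le> c_const" using assms c_facts by auto
    have "(?g has_real_derivative (-(1 + R_fun x)/(1-x) - (1 + R_fun b) * (-1/(1-x)))) (at x)"
      using deriv_f[OF x1(1,2)] x1 by (auto intro!: derivative_eq_intros)
    moreover have "0 \<le> -(1 + R_fun x)/(1-x) - (1 + R_fun b) * (-1/(1-x))"
    proof -
      have "R_fun x \<le> R_fun b" using R_mono x1 x assms by auto
      moreover have "-(1 + R_fun x)/(1-x) - (1 + R_fun b) * (-1/(1-x)) = (R_fun b - R_fun x)/(1-x)"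
        using aux_div[of "1-x" "1 + R_fun x" "1 + R_fun b"] x1 by simp
      ultimately show ?thesis using x1 by (simp add: divide_nonneg_pos)
    qed
    ultimately show "\<exists>y. (?g has_real_derivative y) (at x) \<and> y \<ge> 0" by blast
  qed
  then show ?thesis by (simp add: algebra_simps)
qed

lemma inv_s2: "1 / sqrt 2 = sqrt 2 / (2::real)"
  by (simp add: field_simps)

lemma f0: "f_fun 0 = 1"
proof -
  have "f_fun 0 = ln (1 - c_const)/2 - 1/sqrt 2 + (2 + sqrt 2 - ln (1 - c_const))/2"
    unfolding f_fun_def by simp
  also have "\<dots> = 1" unfolding inv_s2 by (simp add: field_simps)
  finally show ?thesis .
qed

lemma fc: "f_fun c_const = 0"
proof -
  define s where "s = sqrt (2::real)"
  have ss: "s*s = 2" unfolding s_def by simp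
  have sp: "s > 1" unfolding s_def using s2_bounds by simp
  have e0: "c_const - 1 = 1 - s" by (simp add: c_const_def s_def)
  have "s*(1-s)*(-(2 + s)/2) = 1"
  proof -
    have "s*(1-s)*(-(2 + s)) = s*s*s + s*s - 2*s" by (simp add: algebra_simps)
    also have "\<dots> = 2" using ss by (simp add: algebra_simps)
    finally show ?thesis by simp
  qed
  then have "1/(s*(1 - s)) = -(2 + s)/2"
    by (metis divide_eq_eq mult.commute nonzero_eq_divide_eq one_neq_zero mult_zero_right div_by_1)
  then have e': "1/(sqrt 2*(1 - sqrt 2)) = -(2 + sqrt 2)/2" by (simp add: s_def)
  have cm1: "c_const - 1 = 1 - sqrt 2" by (simp add: c_const_def)
  have e: "1/(sqrt 2*(c_const - 1)) = -(2 + sqrt 2)/2" unfolding cm1 by (rule e')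
  have "f_fun c_const = ln (1 - c_const)/2 + 1/(sqrt 2*(c_const - 1)) + (2 + sqrt 2 - ln (1 - c_const))/2"
    unfolding f_fun_def by simp
  also have "\<dots> = 0" unfolding e by (simp add: field_simps)
  finally show ?thesis .
qed

lemma f_strict: "0 \<le> a \<Longrightarrow> a < b \<Longrightarrow> b \<le> c_const \<Longrightarrow> f_fun b < f_fun a"
proof -
  assume a: "0 \<le> a" "a < b" "b \<le> c_const"
  have "0 < (b-a)^2/2" using a by simp
  then show ?thesis using f_dec_quant[of a b] a by linarith
qed

lemma f_mono: "0 \<le> a \<Longrightarrow> a \<le> b \<Longrightarrow> b \<le> c_const \<Longrightarrow> f_fun b \<le> f_fun a"
  using f_strict[of a b] by (cases "a = b") auto

lemma f_inv_props:
  assumes "0 \<le> x" "x \<le> 1"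
  shows "f_inv x \<in> {0..c_const} \<and> f_fun (f_inv x) = x"
proof -
  have ex: "\<exists>y. 0 \<le> y \<and> y \<le> c_const \<and> f_fun y = x"
    using IVT2'[of f_fun c_const x 0] f_cont f0 fc assms c_facts by auto
  have "\<exists>!y. y \<in> {0..c_const} \<and> f_fun y = x"
  proof (rule ex_ex1I)
    show "\<exists>y. y \<in> {0..c_const} \<and> f_fun y = x" using ex by auto
  next
    fix y1 y2 assume a: "y1 \<in> {0..c_const} \<and> f_fun y1 = x" "y2 \<in> {0..c_const} \<and> f_fun y2 = x"
    show "y1 = y2"
    proof (rule ccontr)
      assume "y1 \<noteq> y2"
      then consider "y1 < y2" | "y2 < y1" by linarith
      then show False using a f_strict[of y1 y2] f_strict[of y2 y1] by cases auto
    qed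
  qed
  then show ?thesis unfolding f_inv_def by (rule theI')
qed

lemma f_inv_eq: "y \<in> {0..c_const} \<Longrightarrow> f_fun y = x \<Longrightarrow> f_inv x = y"
proof -
  assume a: "y \<in> {0..c_const}" "f_fun y = x"
  have x: "0 \<le> x" "x \<le> 1" using f_mono[of y c_const] f_mono[of 0 y] a f0 fc by auto
  have b: "f_inv x \<in> {0..c_const}" "f_fun (f_inv x) = x" using f_inv_props[OF x] by auto
  show "f_inv x = y"
  proof (rule ccontr)
    assume "f_inv x \<noteq> y"
    then consider "f_inv x < y" | "y < f_inv x" by linarith
    then show False using a b f_strict[of y "f_inv x"] f_strict[of "f_inv x" y] by cases auto
  qed
qed

lemma f_inv_0: "f_inv 0 = c_const" using f_inv_eq[of c_const 0] fc c_facts by auto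
lemma f_inv_1: "f_inv 1 = 0" using f_inv_eq[of 0 1] f0 c_facts by auto

lemma f_inv_anti:
  assumes "0 \<le> x1" "x1 \<le> x2" "x2 \<le> 1"
  shows "f_inv x2 \<le> f_inv x1"
proof (rule ccontr)
  assume "\<not> ?thesis"
  then have "f_inv x1 < f_inv x2" by simp
  moreover have "f_inv x1 \<in> {0..c_const}" "f_fun (f_inv x1) = x1" using f_inv_props assms by auto
  moreover have "f_inv x2 \<in> {0..c_const}" "f_fun (f_inv x2) = x2" using f_inv_props assms by auto
  ultimately have "x2 < x1" using f_strict[of "f_inv x1" "f_inv x2"] by auto
  then show False using assms by simp
qed

lemma f_refl: "0 \<le> y \<Longrightarrow> y \<le> c_const \<Longrightarrow> f_fun (c_const - y) = f_fun y + R_fun y"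
proof -
  assume y: "0 \<le> y" "y \<le> c_const"
  have e1: "1 - (c_const - y) = 1 - c_const + y" by simp
  have e2: "1 - c_const + (c_const - y) = 1 - y" by simp
  have e3: "1/(sqrt 2 * ((c_const - y) - 1)) = - (1/(sqrt 2*(1 - c_const + y)))"
  proof -
    have "sqrt 2 * ((c_const - y) - 1) = - (sqrt 2*(1 - c_const + y))" by (simp add: algebra_simps)
    then show ?thesis by simp
  qed
  have e4: "1/(sqrt 2 * (y - 1)) = - (1/(sqrt 2*(1 - y)))"
  proof -
    have "sqrt 2 * (y - 1) = - (sqrt 2*(1 - y))" by (simp add: algebra_simps)
    then show ?thesis by simp
  qed
  show ?thesis unfolding f_fun_def R_fun_def e1 e2 e3 e4 by simp
qed

lemma h_eq:
  assumes "0 \<le> x" "x \<le> 1"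
  shows "h_fun x = x + R_fun (f_inv x)" "h_fun x \<le> 1"
proof -
  have p: "f_inv x \<in> {0..c_const}" "f_fun (f_inv x) = x" using f_inv_props assms by auto
  show "h_fun x = x + R_fun (f_inv x)" unfolding h_fun_def using f_refl p by auto
  show "h_fun x \<le> 1" unfolding h_fun_def using f_mono[of 0 "c_const - f_inv x"] p f0 by auto
qed

lemma ln_s2_bound: "- ln (sqrt 2 - 1) \<le> 19/20"
proof -
  have q: "1 + 19/40 + (19/40)^2/2 \<le> exp (19/40::real)" by (rule exp_lower_Taylor_quadratic) simp
  have "(1 + 19/40 + (19/40)^2/2) * (1 + 19/40 + (19/40)^2/2) \<le> exp (19/40::real) * exp (19/40)"
    using q by (intro mult_mono) (auto simp: power2_eq_square)
  also have "\<dots> = exp (19/20)" by (simp flip: exp_add)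
  finally have e: "2.52 \<le> exp (19/20::real)" by (simp add: power2_eq_square)
  have "exp (-19/20::real) = 1 / exp (19/20)" by (simp add: exp_minus field_simps)
  also have "\<dots> \<le> 1 / 2.52" using e by (intro divide_left_mono) auto
  also have "\<dots> \<le> sqrt 2 - 1" using s2_bounds by simp
  finally have "exp (-19/20) \<le> sqrt 2 - 1" .
  moreover have "0 < sqrt 2 - (1::real)" using s2_bounds by simp
  ultimately have "-19/20 \<le> ln (sqrt 2 - 1)" using ln_ge_iff by blast
  then show ?thesis by simp
qed

lemma min_floor_ge:
  assumes zk: "z \<le> real k"
  shows "z - 1 \<le> real (min k (nat \<lfloor>z\<rfloor>))"
proof (cases "nat \<lfloor>z\<rfloor> \<le> k")
  case True
  then have "real (min k (nat \<lfloor>z\<rfloor>)) = real (nat \<lfloor>z\<rfloor>)" by simp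
  moreover have "z - 1 \<le> real (nat \<lfloor>z\<rfloor>)"
  proof -
    have f1: "z < of_int \<lfloor>z\<rfloor> + 1" using floor_correct[of z] by simp
    show ?thesis
    proof (cases "0 \<le> \<lfloor>z\<rfloor>")
      case True
      then have "real (nat \<lfloor>z\<rfloor>) = of_int \<lfloor>z\<rfloor>" by simp
      then show ?thesis using f1 by simp
    next
      case False
      then have "z < 0" using f1 by simp
      then show ?thesis by simp
    qed
  qed
  ultimately show ?thesis by simp
next
  case False
  then show ?thesis using zk by simp
qed

lemma sum_bound:
  assumes k: "5000 \<le> k"
  shows "(\<Sum>r<k. 1 / (real (k - r) + real (min k (nat \<lfloor>real k * h_fun (real r / real k)\<rfloor>)))) \<le> 1"
proof -
  define y where "y r = f_inv (real r / real k)" for r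
  define \<Delta> where "\<Delta> r = ln (1 - y (Suc r)) - ln (1 - y r)" for r
  define den where "den r = real (k - r) + real (min k (nat \<lfloor>real k * h_fun (real r / real k)\<rfloor>))" for r
  have kp: "real k > 0" using k by simp
  have xr: "0 \<le> real r / real k \<and> real r / real k \<le> 1" if "r \<le> k" for r
    using that kp by (simp add: divide_le_eq_1)
  have yr: "y r \<in> {0..c_const} \<and> f_fun (y r) = real r / real k" if "r \<le> k" for r
    unfolding y_def using f_inv_props xr[OF that] by auto
  have termb: "1 / den r \<le> 20/19 * \<Delta> r" if r: "r < k" for r
  proof -
    define a where "a = y (Suc r)"
    define b where "b = y r"
    have ab: "0 \<le> a" "a \<le> b" "b \<le> c_const"
      using yr[of r] yr[of "Suc r"] r f_inv_anti[of "real r / real k" "real (Suc r) / real k"] xr[of "Suc r"] xr[of r] kp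
      unfolding a_def b_def y_def by (auto simp: divide_right_mono)
    have fd: "f_fun a - f_fun b = 1 / real k"
      using yr[of r] yr[of "Suc r"] r unfolding a_def b_def by (simp add: field_simps)
    have key: "1 / real k \<le> (1 + R_fun b) * \<Delta> r"
      using f_key[OF ab] fd unfolding \<Delta>_def a_def b_def by simp
    have dq: "(b-a)^2/2 \<le> 1 / real k" using f_dec_quant[OF ab] fd by simp
    have "1 / real k \<le> 1 / 5000" using k kp by (simp add: divide_left_mono)
    then have "(b-a)*(b-a) \<le> 1/2500" using dq by (simp add: power2_eq_square)
    then have bma: "b - a \<le> 1/50"
    proof -
      assume h: "(b-a)*(b-a) \<le> 1/2500"
      show ?thesis
      proof (rule ccontr)
        assume "\<not> b - a \<le> 1/50"
        then have "1/50 < b - a" by simp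
        then have "(1/50)*(1/50) < (b-a)*(b-a)" by (intro mult_strict_mono) auto
        then show False using h by simp
      qed
    qed
    have cb: "c_const < 1" "1 - c_const = sqrt 2 - 1" using c_facts by auto
    have b1: "0 < 1 - b" "0 < 1 - a" using ab cb by auto
    have "\<Delta> r = ln ((1-a)/(1-b))" unfolding \<Delta>_def a_def[symmetric] b_def[symmetric]
      using b1 by (simp add: ln_div)
    also have "\<dots> \<le> (1-a)/(1-b) - 1" using b1 by (intro ln_le_minus_one) simp
    also have "\<dots> = (b-a)/(1-b)" using b1 by (simp add: field_simps)
    also have "\<dots> \<le> (b-a)/(2/5)"
    proof (rule divide_left_mono)
      have "7/5 \<le> sqrt (2::real)" using s2_bounds(1) by simp
      then show "2/5 \<le> 1 - b" using ab cb by linarith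
    qed (use ab b1 in auto)
    finally have Dup: "\<Delta> r \<le> 1/20" using bma by simp
    have Dnn: "0 \<le> \<Delta> r" unfolding \<Delta>_def a_def[symmetric] b_def[symmetric]
      using b1 ab by simp
    have hr: "h_fun (real r / real k) = real r / real k + R_fun b"
      using h_eq[of "real r / real k"] xr[of r] r unfolding b_def y_def by auto
    have h1: "h_fun (real r / real k) \<le> 1" using h_eq[of "real r / real k"] xr[of r] r by auto
    have "real k * h_fun (real r / real k) \<le> real k" using h1 kp by simp
    then have "real k * h_fun (real r / real k) - 1 \<le> real (min k (nat \<lfloor>real k * h_fun (real r / real k)\<rfloor>))"
      by (rule min_floor_ge)
    moreover have "real (k - r) = real k - real r" using r by simp
    moreover have "real k * h_fun (real r / real k) = real r + real k * R_fun b"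
      using hr kp by (simp add: field_simps)
    ultimately have dlow: "real k * (1 + R_fun b) - 1 \<le> den r" unfolding den_def by (simp add: algebra_simps)
    define A where "A = real k * (1 + R_fun b)"
    have AD: "1 \<le> A * \<Delta> r" using key kp unfolding A_def
      by (simp add: field_simps)
    have Dpos: "0 < \<Delta> r" using AD Dnn by (cases "\<Delta> r = 0") auto
    have AD2: "19/20 \<le> \<Delta> r * (A - 1)" using AD Dup by (simp add: algebra_simps)
    have A1: "0 < A - 1"
    proof (rule ccontr)
      assume "\<not> 0 < A - 1"
      then have "\<Delta> r * (A - 1) \<le> 0" using Dpos by (simp add: mult_nonneg_nonpos)
      then show False using AD2 by simp
    qed
    have "1 / den r \<le> 1 / (A - 1)" using dlow A1 unfolding A_def[symmetric]
      by (intro divide_left_mono) auto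
    also have "\<dots> \<le> 20/19 * \<Delta> r" using A1 AD2 by (simp add: divide_le_eq algebra_simps)
    finally show ?thesis .
  qed
  have "(\<Sum>r<k. 1 / den r) \<le> (\<Sum>r<k. 20/19 * \<Delta> r)" using termb by (intro sum_mono) auto
  also have "\<dots> = 20/19 * (\<Sum>r<k. \<Delta> r)" by (simp add: sum_distrib_left)
  also have "(\<Sum>r<k. \<Delta> r) = ln (1 - y k) - ln (1 - y 0)"
    unfolding \<Delta>_def by (rule sum_lessThan_telescope)
  also have "y k = 0" unfolding y_def using kp f_inv_1 by simp
  also have "y 0 = c_const" unfolding y_def using f_inv_0 by simp
  also have "ln (1 - 0) - ln (1 - c_const) = - ln (sqrt 2 - 1)" using c_facts by simp
  finally have "(\<Sum>r<k. 1 / den r) \<le> 20/19 * (- ln (sqrt 2 - 1))" .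
  also have "\<dots> \<le> 20/19 * (19/20)" using ln_s2_bound by (intro mult_left_mono) auto
  finally show ?thesis unfolding den_def by simp
qed

lemma dl_map:
  assumes "0 < k"
  shows "u_deadlines k m = map (\<lambda>j. U (j div k + 1) (j mod k + 1)) [0..<m*k]"
proof (induction m)
  case 0
  then show ?case by (simp add: u_deadlines_def)
next
  case (Suc m)
  have "u_deadlines k (Suc m) = u_deadlines k m @ map (\<lambda>i. U (Suc m) i) [1..<k+1]"
    by (simp add: u_deadlines_def)
  also have "map (\<lambda>i. U (Suc m) i) [1..<k+1] = map (\<lambda>j. U (j div k + 1) (j mod k + 1)) [m*k..<m*k+k]"
  proof (rule nth_equalityI)
    show "length (map (U (Suc m)) [1..<k + 1]) = length (map (\<lambda>j. U (j div k + 1) (j mod k + 1)) [m * k..<m * k + k])"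
      by simp
  next
    fix r assume "r < length (map (U (Suc m)) [1..<k + 1])"
    then have r: "r < k" by (simp only: length_map length_upt)
    have "(m*k + r) div k = m" using r assms by simp
    moreover have "(m*k + r) mod k = r" using r assms by simp
    ultimately show "map (U (Suc m)) [1..<k + 1] ! r = map (\<lambda>j. U (j div k + 1) (j mod k + 1)) [m * k..<m * k + k] ! r"
      using r by (simp del: upt_Suc)
  qed
  also have "u_deadlines k m @ map (\<lambda>j. U (j div k + 1) (j mod k + 1)) [m*k..<m*k+k]
      = map (\<lambda>j. U (j div k + 1) (j mod k + 1)) ([0..<m*k] @ [m*k..<m*k+k])"
    using Suc by simp
  also have "[0..<m*k] @ [m*k..<m*k+k] = [0..<Suc m * k]"
  proof -
    have "[0..<m*k + k] = [0..<m*k] @ [m*k..<m*k+k]" by (rule upt_add_eq_append) simp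
    moreover have "Suc m * k = m*k + k" by simp
    ultimately show ?thesis by (simp only:)
  qed
  finally show ?case .
qed

lemma dl_len: "0 < k \<Longrightarrow> length (u_deadlines k m) = m * k"
  by (simp add: dl_map)

lemma dl_nth: "0 < k \<Longrightarrow> j < m * k \<Longrightarrow> u_deadlines k m ! j = U (j div k + 1) (j mod k + 1)"
  by (simp add: dl_map)

lemma dl_take:
  assumes "0 < k" "j < m * k"
  shows "set (take (Suc j) (u_deadlines k m)) = (\<lambda>j'. U (j' div k + 1) (j' mod k + 1)) ` {..j}"
proof -
  have "take (Suc j) [0..<m*k] = [0..<Suc j]" using assms by (simp add: take_upt min_def del: upt_Suc)
  then have "set (take (Suc j) (u_deadlines k m)) = (\<lambda>j'. U (j' div k + 1) (j' mod k + 1)) ` set [0..<Suc j]"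
    using assms by (simp add: dl_map take_map del: upt_Suc)
  moreover have "set [0..<Suc j] = {..j}" by auto
  ultimately show ?thesis by (simp only:)
qed

lemma verts_finite: "finite (verts k m)"
proof -
  have "verts k m \<subseteq> (\<lambda>(t,i). U t i) ` ({1..m} \<times> {1..k}) \<union> (\<lambda>(t,i). V t i) ` ({1..m} \<times> {1..k})"
    unfolding verts_def by auto
  then show ?thesis by (rule finite_subset) auto
qed

definition S_set :: "nat \<Rightarrow> vtx set" where
  "S_set t = {w. \<exists>q. w = V t q \<or> w = U (t+1) q}"

lemma dm: "b < k \<Longrightarrow> (a*k + b) div k = a \<and> (a*k + b) mod k = (b::nat)"
  by simp

lemma N_sub_S:
  assumes k: "0 < k" and j: "j < m * k"
  shows "open_nbrs k m j \<subseteq> S_set (j div k + 1)"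
proof
  fix w assume w: "w \<in> open_nbrs k m j"
  define t where "t = j div k + 1"
  define i where "i = j mod k + 1"
  have u: "u_deadlines k m ! j = U t i" using dl_nth[OF k j] t_def i_def by simp
  have wv: "w \<in> verts k m" and ad: "adj k m (U t i) w"
    and nt: "w \<notin> set (take (Suc j) (u_deadlines k m))"
    using w u unfolding open_nbrs_def by auto
  show "w \<in> S_set t"
  proof (cases w)
    case (V t' q)
    then have "edge_dir k m (U t i) (V t' q)" using ad unfolding adj_def by auto
    then show ?thesis using V unfolding S_set_def by auto
  next
    case (U t' q)
    consider "edge_dir k m (U t i) (U t' q)" | "edge_dir k m (U t' q) (U t i)"
      using ad U unfolding adj_def by auto
    then show ?thesis
    proof cases
      case 1
      then show ?thesis using U unfolding S_set_def by auto
    next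
      case 2
      then have tt: "t = t' + 1" and q: "q \<in> {1..k}" and t'1: "t' \<ge> 1" by auto
      define j' where "j' = (t'-1)*k + (q-1)"
      have "j' < t' * k"
      proof -
        have "j' < (t'-1)*k + k" using q unfolding j'_def by auto
        also have "(t'-1)*k + k = t'*k" using t'1 by (cases t') auto
        finally show ?thesis .
      qed
      moreover have "t' * k \<le> j" using tt t_def
        by (metis add_right_cancel div_times_less_eq_dividend mult.commute)
      ultimately have jj: "j' \<le> j" by simp
      have "q - 1 < k" using q by auto
      then have "j' div k = t' - 1" "j' mod k = q - 1" using dm[of "q-1" k "t'-1"] unfolding j'_def by auto
      then have "U (j' div k + 1) (j' mod k + 1) = U t' q" using q t'1 by auto
      then have "w \<in> set (take (Suc j) (u_deadlines k m))"
        using dl_take[OF k j] jj U by force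
      then show ?thesis using nt by simp
    qed
  qed
qed

lemma u_not_N: "u_deadlines k m ! j \<notin> open_nbrs k m j" if "j < length (u_deadlines k m)"
  using that unfolding open_nbrs_def by (auto simp: in_set_conv_nth intro: exI[of _ j])

lemma u_in_verts:
  assumes k: "0 < k" and j: "j < m * k"
  shows "u_deadlines k m ! j \<in> verts k m"
proof -
  have "j div k < m" using j k by (simp add: div_less_iff_less_mult)
  moreover have "j mod k < k" using k by simp
  ultimately show ?thesis using dl_nth[OF k j] unfolding verts_def by auto
qed

definition Dv :: "nat \<Rightarrow> nat \<Rightarrow> nat" where
  "Dv k r = min k (nat \<lfloor>real k * h_fun (real r / real k)\<rfloor>)"

lemma N_contains:
  assumes k: "0 < k" and j: "j < m * k" and tm: "j div k + 1 \<le> m - 1"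
  shows "(\<lambda>q. V (j div k + 1) q) ` {j mod k + 1..k} \<union> (\<lambda>q. U (j div k + 2) q) ` {1..Dv k (j mod k)}
         \<subseteq> open_nbrs k m j"
proof -
  define t where "t = j div k + 1"
  define r where "r = j mod k"
  have rk: "r < k" using k r_def by simp
  have u: "u_deadlines k m ! j = U t (r+1)" using dl_nth[OF k j] t_def r_def by simp
  have t1: "1 \<le> t" "t + 1 \<le> m" using tm t_def by auto
  have tk: "set (take (Suc j) (u_deadlines k m)) = (\<lambda>j'. U (j' div k + 1) (j' mod k + 1)) ` {..j}"
    using dl_take[OF k j] .
  have "V t q \<in> open_nbrs k m j" if q: "q \<in> {r+1..k}" for q
  proof -
    have "V t q \<in> verts k m" using q t1 unfolding verts_def by auto
    moreover have "adj k m (U t (r+1)) (V t q)" unfolding adj_def using q t1 rk by auto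
    moreover have "V t q \<notin> set (take (Suc j) (u_deadlines k m))" using tk by auto
    ultimately show ?thesis unfolding open_nbrs_def u by auto
  qed
  moreover have "U (t+1) q \<in> open_nbrs k m j" if q: "q \<in> {1..Dv k r}" for q
  proof -
    have qk: "q \<le> k" and qD: "q \<le> nat \<lfloor>real k * h_fun (real r / real k)\<rfloor>" using q unfolding Dv_def by auto
    have "U (t+1) q \<in> verts k m" using q qk t1 unfolding verts_def by auto
    moreover have "int q \<le> \<lfloor>real k * h_fun (real r / real k)\<rfloor>"
    proof -
      define z where "z = \<lfloor>real k * h_fun (real r / real k)\<rfloor>"
      have a: "int q \<le> int (nat z)" using qD unfolding z_def by (simp only: of_nat_le_iff)
      have "1 \<le> q" using q by simp
      then have "0 \<le> z" using a by (cases "0 \<le> z") auto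
      then show ?thesis using a unfolding z_def[symmetric] by simp
    qed
    then have "adj k m (U t (r+1)) (U (t+1) q)" unfolding adj_def using q t1 rk by auto
    moreover have "U (t+1) q \<notin> set (take (Suc j) (u_deadlines k m))"
    proof
      assume "U (t+1) q \<in> set (take (Suc j) (u_deadlines k m))"
      then obtain j' where "j' \<le> j" "U (t+1) q = U (j' div k + 1) (j' mod k + 1)" using tk by auto
      then have "j' div k = t" "j' div k \<le> j div k" by (auto simp: div_le_mono)
      then show False using t_def by simp
    qed
    ultimately show ?thesis unfolding open_nbrs_def u by auto
  qed
  ultimately show ?thesis using t_def r_def by (auto simp: numeral_2_eq_2)
qed

lemma N_card:
  assumes k: "0 < k" and j: "j < m * k" and tm: "j div k + 1 \<le> m - 1"
  shows "(k - j mod k) + Dv k (j mod k) \<le> card (open_nbrs k m j)"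
proof -
  let ?A = "(\<lambda>q. V (j div k + 1) q) ` {j mod k + 1..k}"
  let ?B = "(\<lambda>q. U (j div k + 2) q) ` {1..Dv k (j mod k)}"
  have "card (?A \<union> ?B) = card ?A + card ?B" by (rule card_Un_disjoint) auto
  also have "card ?A = k - j mod k" by (subst card_image) (auto simp: inj_on_def)
  also have "card ?B = Dv k (j mod k)" by (subst card_image) (auto simp: inj_on_def)
  finally have "card (?A \<union> ?B) = k - j mod k + Dv k (j mod k)" .
  moreover have "card (?A \<union> ?B) \<le> card (open_nbrs k m j)"
  proof (rule card_mono)
    show "finite (open_nbrs k m j)"
      using verts_finite by (rule rev_finite_subset) (auto simp: open_nbrs_def)
  qed (rule N_contains[OF assms])
  ultimately show ?thesis by simp
qed

lemma row_bound:
  assumes k: "5000 \<le> k" and t: "1 \<le> t" "t \<le> m - 1"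
  shows "(\<Sum>j'\<in>{(t-1)*k..<t*k}. 1 / real (card (open_nbrs k m j'))) \<le> 1"
proof -
  have kp: "0 < k" using k by simp
  have img: "{(t-1)*k..<t*k} = (\<lambda>r. (t-1)*k + r) ` {..<k}"
  proof -
    have "t*k = (t-1)*k + k" using t by (cases t) auto
    show ?thesis
    proof (rule set_eqI, rule iffI)
      fix x assume "x \<in> {(t-1)*k..<t*k}"
      then have "x = (t-1)*k + (x - (t-1)*k)" "x - (t-1)*k < k" using \<open>t*k = (t-1)*k + k\<close> by auto
      then show "x \<in> (\<lambda>r. (t-1)*k + r) ` {..<k}" by (metis image_eqI lessThan_iff)
    next
      fix x assume "x \<in> (\<lambda>r. (t-1)*k + r) ` {..<k}"
      then show "x \<in> {(t-1)*k..<t*k}" using \<open>t*k = (t-1)*k + k\<close> by auto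
    qed
  qed
  have "(\<Sum>j'\<in>{(t-1)*k..<t*k}. 1 / real (card (open_nbrs k m j')))
      = (\<Sum>r<k. 1 / real (card (open_nbrs k m ((t-1)*k + r))))"
    unfolding img by (subst sum.reindex) (auto simp: inj_on_def)
  also have "\<dots> \<le> (\<Sum>r<k. 1 / (real (k - r) + real (min k (nat \<lfloor>real k * h_fun (real r / real k)\<rfloor>))))"
  proof (rule sum_mono)
    fix r assume r: "r \<in> {..<k}"
    define j where "j = (t-1)*k + r"
    have jd: "j div k = t - 1" "j mod k = r" using dm[of r k "t-1"] r unfolding j_def by auto
    have jm: "j < m * k"
    proof -
      have "j < (t-1)*k + k" using r j_def by simp
      also have "\<dots> = t * k" using t by (cases t) auto
      also have "\<dots> \<le> m * k" using t by (intro mult_le_mono1) linarith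
      finally show ?thesis .
    qed
    have "j div k + 1 \<le> m - 1" using jd t by simp
    from N_card[OF kp jm this] have c: "k - r + Dv k r \<le> card (open_nbrs k m j)" using jd by simp
    have pos: "0 < real (k - r) + real (Dv k r)" using r by simp
    have "real (k - r) + real (Dv k r) \<le> real (card (open_nbrs k m j))" using c by linarith
    then have "1 / real (card (open_nbrs k m j)) \<le> 1 / (real (k - r) + real (Dv k r))"
      using pos by (intro divide_left_mono) auto
    then show "1 / real (card (open_nbrs k m ((t-1)*k + r))) \<le> 1 / (real (k - r) + real (min k (nat \<lfloor>real k * h_fun (real r / real k)\<rfloor>)))"
      unfolding j_def Dv_def by simp
  qed
  also have "\<dots> \<le> 1" by (rule sum_bound[OF k])
  finally show ?thesis .
qed

lemma step_analysis:
  assumes st: "wf_step Vs x u N x'" and fin: "finite Vs" and NV: "N \<subseteq> Vs" and uV: "u \<in> Vs"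
    and uN: "u \<notin> N" and sym: "\<forall>a b. x a b = x b a" and nn: "\<forall>a b. 0 \<le> x a b"
  shows "\<exists>L. L \<le> 1 \<and> (\<forall>a b. x' a b = x' b a) \<and> (\<forall>a b. 0 \<le> x' a b)
     \<and> (\<forall>w. w \<notin> N \<longrightarrow> w \<noteq> u \<longrightarrow> level Vs x' w = level Vs x w)
     \<and> (\<forall>w\<in>N. level Vs x' w = level Vs x w + max 0 (L - level Vs x w))
     \<and> level Vs x' u = level Vs x u + (\<Sum>v\<in>N. max 0 (L - level Vs x v))
     \<and> level Vs x' u \<le> 1 \<and> (level Vs x' u = 1 \<or> L = 1)"
proof -
  obtain L where L1: "L \<le> 1"
    and E1: "\<forall>v\<in>N. x' u v = x u v + max 0 (L - level Vs x v) \<and> x' v u = x' u v"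
    and E2: "\<forall>a b. \<not> ((a = u \<and> b \<in> N) \<or> (b = u \<and> a \<in> N)) \<longrightarrow> x' a b = x a b"
    and lu: "level Vs x' u \<le> 1" and fin1: "level Vs x' u = 1 \<or> L = 1"
    using st unfolding wf_step_def by blast
  define d where "d v = max 0 (L - level Vs x v)" for v
  have sym': "\<forall>a b. x' a b = x' b a"
  proof (intro allI)
    fix a b
    show "x' a b = x' b a"
    proof (cases "(a = u \<and> b \<in> N) \<or> (b = u \<and> a \<in> N)")
      case True
      then show ?thesis using E1 by auto
    next
      case False
      then have "\<not> ((b = u \<and> a \<in> N) \<or> (a = u \<and> b \<in> N))" by blast
      then show ?thesis using E2 False sym by metis
    qed
  qed
  have nn': "\<forall>a b. 0 \<le> x' a b"
  proof (intro allI)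
    fix a b
    show "0 \<le> x' a b"
    proof (cases "a = u \<and> b \<in> N")
      case True
      then show ?thesis using E1 nn by (auto intro: add_nonneg_nonneg)
    next
      case F1: False
      show ?thesis
      proof (cases "b = u \<and> a \<in> N")
        case True
        then have "x' a b = x' u a" using E1 by auto
        then show ?thesis using E1 nn True by (auto intro: add_nonneg_nonneg)
      next
        case False
        then show ?thesis using E2 F1 nn by metis
      qed
    qed
  qed
  have lv1: "\<forall>w. w \<notin> N \<longrightarrow> w \<noteq> u \<longrightarrow> level Vs x' w = level Vs x w"
    unfolding level_def using E2 by (auto intro!: sum.cong)
  have lv2: "level Vs x' w = level Vs x w + d w" if w: "w \<in> N" for w
  proof -
    have wu: "w \<noteq> u" using w uN by auto
    have "\<forall>z. x' w z = x w z + (if z = u then d w else 0)"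
    proof
      fix z
      show "x' w z = x w z + (if z = u then d w else 0)"
      proof (cases "z = u")
        case True
        then show ?thesis using E1 w sym unfolding d_def by auto
      next
        case False
        then show ?thesis using E2 wu by auto
      qed
    qed
    then have "level Vs x' w = (\<Sum>z\<in>Vs. x w z + (if z = u then d w else 0))"
      unfolding level_def by simp
    also have "\<dots> = level Vs x w + (\<Sum>z\<in>Vs. (if z = u then d w else 0))"
      unfolding level_def by (simp add: sum.distrib)
    also have "(\<Sum>z\<in>Vs. (if z = u then d w else 0)) = d w" using fin uV by simp
    finally show ?thesis .
  qed
  have lv3: "level Vs x' u = level Vs x u + (\<Sum>v\<in>N. d v)"
  proof -
    have "\<forall>z. x' u z = x u z + (if z \<in> N then d z else 0)"
    proof
      fix z
      show "x' u z = x u z + (if z \<in> N then d z else 0)"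
      proof (cases "z \<in> N")
        case True
        then show ?thesis using E1 unfolding d_def by auto
      next
        case False
        then show ?thesis using E2 uN by auto
      qed
    qed
    then have "level Vs x' u = (\<Sum>z\<in>Vs. x u z + (if z \<in> N then d z else 0))"
      unfolding level_def by simp
    also have "\<dots> = level Vs x u + (\<Sum>z\<in>Vs. (if z \<in> N then d z else 0))"
      unfolding level_def by (simp add: sum.distrib)
    also have "(\<Sum>z\<in>Vs. (if z \<in> N then d z else 0)) = (\<Sum>z\<in>Vs \<inter> N. d z)"
      using fin by (simp add: sum.inter_restrict)
    also have "Vs \<inter> N = N" using NV by auto
    finally show ?thesis .
  qed
  show ?thesis using L1 sym' nn' lv1 lv2 lv3 lu fin1 unfolding d_def by blast
qed

definition Bsum :: "nat \<Rightarrow> nat \<Rightarrow> nat \<Rightarrow> nat \<Rightarrow> real" where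
  "Bsum k m t j = (\<Sum>j'\<in>{(t-1)*k..<j}. 1 / real (card (open_nbrs k m j')))"

lemma Bsum_nonneg: "0 \<le> Bsum k m t j"
  unfolding Bsum_def by (intro sum_nonneg) auto

lemma Bsum_mono: "j \<le> j' \<Longrightarrow> Bsum k m t j \<le> Bsum k m t j'"
  unfolding Bsum_def by (intro sum_mono2) auto

lemma Bsum_Suc: "(t-1)*k \<le> j \<Longrightarrow> Bsum k m t (Suc j) = Bsum k m t j + 1 / real (card (open_nbrs k m j))"
  unfolding Bsum_def by (simp add: sum.atLeastLessThan_Suc)

lemma S_disj: "w \<in> S_set t \<Longrightarrow> w \<in> S_set t' \<Longrightarrow> t = t'"
  by (auto simp: S_set_def)

lemma N_finite: "finite (open_nbrs k m j)"
  using verts_finite by (rule rev_finite_subset) (auto simp: open_nbrs_def)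

lemma N_verts: "open_nbrs k m j \<subseteq> verts k m"
  by (auto simp: open_nbrs_def)

lemma invariant:
  assumes k: "0 < k" and run: "wf_run k m xs"
  shows "j \<le> m*k \<Longrightarrow> (\<forall>a b. 0 \<le> xs j a b) \<and> (\<forall>a b. xs j a b = xs j b a) \<and>
     (\<forall>t w. j \<le> t*k \<longrightarrow> w \<in> S_set t \<longrightarrow> level (verts k m) (xs j) w \<le> Bsum k m t j)"
proof (induction j)
  case 0
  have "xs 0 = (\<lambda>_ _. 0)" using run unfolding wf_run_def by simp
  then show ?case using Bsum_nonneg by (simp add: level_def)
next
  case (Suc j)
  have j: "j < m * k" using Suc.prems by simp
  have IH: "\<forall>a b. 0 \<le> xs j a b" "\<forall>a b. xs j a b = xs j b a"
    "\<forall>t w. j \<le> t*k \<longrightarrow> w \<in> S_set t \<longrightarrow> level (verts k m) (xs j) w \<le> Bsum k m t j"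
    using Suc by auto
  define Vs where "Vs = verts k m"
  define u where "u = u_deadlines k m ! j"
  define N where "N = open_nbrs k m j"
  define t0 where "t0 = j div k + 1"
  have jl: "j < length (u_deadlines k m)" using j dl_len[OF k] by simp
  have st: "wf_step Vs (xs j) u N (xs (Suc j))"
    using run jl unfolding wf_run_def Vs_def u_def N_def by blast
  have uU: "u = U t0 (j mod k + 1)" using dl_nth[OF k j] u_def t0_def by simp
  obtain L where L1: "L \<le> 1" and sym': "\<forall>a b. xs (Suc j) a b = xs (Suc j) b a"
    and nn': "\<forall>a b. 0 \<le> xs (Suc j) a b"
    and lv1: "\<forall>w. w \<notin> N \<longrightarrow> w \<noteq> u \<longrightarrow> level Vs (xs (Suc j)) w = level Vs (xs j) w"
    and lv2: "\<forall>w\<in>N. level Vs (xs (Suc j)) w = level Vs (xs j) w + max 0 (L - level Vs (xs j) w)"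
    and lv3: "level Vs (xs (Suc j)) u = level Vs (xs j) u + (\<Sum>v\<in>N. max 0 (L - level Vs (xs j) v))"
    and lu: "level Vs (xs (Suc j)) u \<le> 1"
    using step_analysis[OF st verts_finite[of k m, folded Vs_def] N_verts[of k m j, folded Vs_def N_def]
        u_in_verts[OF k j, folded Vs_def u_def] u_not_N[OF jl, folded u_def N_def] IH(2) IH(1)]
    by blast
  have lev: "level Vs (xs (Suc j)) w \<le> Bsum k m t (Suc j)" if tw: "Suc j \<le> t*k" "w \<in> S_set t" for t w
  proof -
    have IHw: "level Vs (xs j) w \<le> Bsum k m t j" using IH(3) tw unfolding Vs_def by simp
    have Bm: "Bsum k m t j \<le> Bsum k m t (Suc j)" by (rule Bsum_mono) simp
    have t0t: "t0 \<le> t"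
    proof -
      have "j div k < t" using tw(1) k by (simp add: div_less_iff_less_mult)
      then show ?thesis unfolding t0_def by simp
    qed
    show ?thesis
    proof (cases "w \<in> N")
      case True
      have "w \<in> S_set t0" using N_sub_S[OF k j] True unfolding N_def t0_def by auto
      then have tt: "t0 = t" using S_disj tw(2) by blast
      have jt: "(t-1)*k \<le> j"
      proof -
        have "t - 1 = j div k" using tt unfolding t0_def by simp
        then have "(t-1)*k = j div k * k" by simp
        also have "\<dots> \<le> j" by (rule div_times_less_eq_dividend)
        finally show ?thesis .
      qed
      have BS: "Bsum k m t (Suc j) = Bsum k m t j + 1 / real (card N)" using Bsum_Suc[OF jt] N_def by simp
      have cN: "0 < card N" using True N_finite[of k m j] unfolding N_def by (auto simp: card_gt_0_iff)
      have allv: "\<forall>v\<in>N. level Vs (xs j) v \<le> Bsum k m t j"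
      proof
        fix v assume "v \<in> N"
        then have "v \<in> S_set t" using N_sub_S[OF k j] tt unfolding N_def t0_def by auto
        then show "level Vs (xs j) v \<le> Bsum k m t j" using IH(3) tw(1) unfolding Vs_def by simp
      qed
      have LB: "L \<le> Bsum k m t j + 1 / real (card N)"
      proof (rule ccontr)
        assume "\<not> ?thesis"
        then have gt: "Bsum k m t j + 1 / real (card N) < L" by simp
        have "(\<Sum>v\<in>N. L - Bsum k m t j) \<le> (\<Sum>v\<in>N. max 0 (L - level Vs (xs j) v))"
          using allv by (intro sum_mono) auto
        moreover have "(\<Sum>v\<in>N. L - Bsum k m t j) = real (card N) * (L - Bsum k m t j)" by simp
        moreover have "1 < real (card N) * (L - Bsum k m t j)"
        proof -
          have "1 / real (card N) < L - Bsum k m t j" using gt by simp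
          then show ?thesis using cN by (simp add: field_simps)
        qed
        moreover have "0 \<le> level Vs (xs j) u" unfolding level_def using IH(1) by (intro sum_nonneg) auto
        ultimately have "1 < level Vs (xs (Suc j)) u" using lv3 by linarith
        then show False using lu by simp
      qed
      have "level Vs (xs (Suc j)) w = level Vs (xs j) w + max 0 (L - level Vs (xs j) w)" using lv2 True by simp
      also have "\<dots> = max (level Vs (xs j) w) L" by (simp add: max_def)
      also have "\<dots> \<le> Bsum k m t j + 1 / real (card N)"
      proof -
        have c0: "0 \<le> 1 / real (card N)" by simp
        show ?thesis unfolding max.bounded_iff using IHw LB c0 by (intro conjI) linarith+
      qed
      finally show ?thesis using BS by simp
    next
      case False
      have "w \<noteq> u"
      proof
        assume "w = u"
        then have "U t0 (j mod k + 1) \<in> S_set t" using tw uU by simp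
        then show False using t0t by (auto simp: S_set_def)
      qed
      then have "level Vs (xs (Suc j)) w = level Vs (xs j) w" using lv1 False by simp
      then show ?thesis using IHw Bm by simp
    qed
  qed
  show ?case using sym' nn' lev unfolding Vs_def by blast
qed

theorem corollary3p4:
  shows "\<exists>K::nat. \<forall>k\<ge>K. \<forall>m::nat. \<forall>xs. wf_run k m xs \<longrightarrow>
           (\<forall>j t i. j < length (u_deadlines k m) \<and> u_deadlines k m ! j = U t i \<and>
                    1 \<le> t \<and> t \<le> m - 1 \<and> 1 \<le> i \<and> i \<le> k
              \<longrightarrow> level (verts k m) (xs (Suc j)) (U t i) = 1)"
proof (intro exI[of _ 5000] allI impI)
  fix k m xs j t i
  assume k: "5000 \<le> k" and run: "wf_run k m xs"
    and H: "j < length (u_deadlines k m) \<and> u_deadlines k m ! j = U t i \<and> 1 \<le> t \<and> t \<le> m - 1 \<and> 1 \<le> i \<and> i \<le> k"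
  have kp: "0 < k" using k by simp
  have j: "j < m * k" using H dl_len[OF kp] by simp
  have jl: "j < length (u_deadlines k m)" using H by simp
  have tj: "t = j div k + 1" using H dl_nth[OF kp j] by simp
  define Vs where "Vs = verts k m"
  define u where "u = u_deadlines k m ! j"
  define N where "N = open_nbrs k m j"
  have uU: "u = U t i" using H u_def by simp
  have inv: "(\<forall>a b. 0 \<le> xs j a b) \<and> (\<forall>a b. xs j a b = xs j b a) \<and>
     (\<forall>t w. j \<le> t*k \<longrightarrow> w \<in> S_set t \<longrightarrow> level (verts k m) (xs j) w \<le> Bsum k m t j)"
    using invariant[OF kp run] j by simp
  have st: "wf_step Vs (xs j) u N (xs (Suc j))"
    using run jl unfolding wf_run_def Vs_def u_def N_def by blast
  obtain L where L1: "L \<le> 1"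
    and lv3: "level Vs (xs (Suc j)) u = level Vs (xs j) u + (\<Sum>v\<in>N. max 0 (L - level Vs (xs j) v))"
    and lu: "level Vs (xs (Suc j)) u \<le> 1" and fin1: "level Vs (xs (Suc j)) u = 1 \<or> L = 1"
    using step_analysis[OF st verts_finite[of k m, folded Vs_def] N_verts[of k m j, folded Vs_def N_def]
        u_in_verts[OF kp j, folded Vs_def u_def] u_not_N[OF jl, folded u_def N_def]] inv
    by blast
  have "level Vs (xs (Suc j)) u = 1"
  proof (cases "level Vs (xs (Suc j)) u = 1")
    case True
    then show ?thesis .
  next
    case False
    then have L: "L = 1" using fin1 by simp
    have jtk: "Suc j \<le> t * k"
    proof -
      have "j < (j div k + 1) * k" using kp by (simp add: dividend_less_div_times)
      then show ?thesis using tj by simp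
    qed
    have jt: "(t-1)*k \<le> j"
    proof -
      have "t - 1 = j div k" using tj by simp
      then have "(t-1)*k = j div k * k" by simp
      also have "\<dots> \<le> j" by (rule div_times_less_eq_dividend)
      finally show ?thesis .
    qed
    have tm: "j div k + 1 \<le> m - 1" using H tj by simp
    have "j mod k < k" using kp by simp
    then have "1 \<le> k - j mod k + Dv k (j mod k)" by simp
    then have cN: "1 \<le> card N" using N_card[OF kp j tm] unfolding N_def by linarith
    define B where "B = Bsum k m t j"
    have "B + 1 / real (card N) = Bsum k m t (Suc j)" using Bsum_Suc[OF jt] B_def N_def by simp
    also have "\<dots> \<le> Bsum k m t (t*k)" by (rule Bsum_mono[OF jtk])
    also have "\<dots> \<le> 1" unfolding Bsum_def using row_bound[OF k] H by simp
    finally have Bc: "B + 1 / real (card N) \<le> 1" .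
    have allv: "\<forall>v\<in>N. level Vs (xs j) v \<le> B"
    proof
      fix v assume "v \<in> N"
      then have "v \<in> S_set t" using N_sub_S[OF kp j] tj unfolding N_def by auto
      then show "level Vs (xs j) v \<le> B" using inv jtk unfolding Vs_def B_def by simp
    qed
    have "(\<Sum>v\<in>N. 1 - B) \<le> (\<Sum>v\<in>N. max 0 (L - level Vs (xs j) v))"
      using allv L by (intro sum_mono) auto
    moreover have "(\<Sum>v\<in>N. 1 - B) = real (card N) * (1 - B)" by simp
    moreover have "1 \<le> real (card N) * (1 - B)"
    proof -
      have "1 / real (card N) \<le> 1 - B" using Bc by simp
      then show ?thesis using cN by (simp add: field_simps)
    qed
    moreover have "0 \<le> level Vs (xs j) u" unfolding level_def using inv by (intro sum_nonneg) auto
    ultimately have "1 \<le> level Vs (xs (Suc j)) u" using lv3 by linarith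
    then show ?thesis using lu by simp
  qed
  then show "level (verts k m) (xs (Suc j)) (U t i) = 1" using uU Vs_def by simp
qed

end
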